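(* Let $n\ge k\ge 1$ be integers, $i\in\{1,\ldots,n\}$, let $H\sim\text{Hyp}(n,i,k)$, and fix an integer $m\in \{0,1,\ldots,\min\{i,k\}\}$. Then \[ \mathbb{P}(H \ge m) = \frac{\binom{k}{m}\cdot \binom{i}{m}}{\binom{n}{m}} \cdot \mathbb{E}\left(\frac{1}{\binom{Z_m+m}{m}} \right), \] where $Z_m\sim\text{Hyp}(n-m,i-m,k-m)$.
   Context: $\text{Hyp}(N,a,b)$ (for integers $0\le a\le N$, $0\le b\le N$) denotes the hypergeometric distribution: the number of black marbles in a sample without replacement of size $b$ from an urn with $a$ black and $N-a$ white marbles, i.e. $\mathbb{P}(Z=j)=\binom{a}{j}\binom{N-a}{b-j}/\binom{N}{b}$ for $j\in\{\max\{0,b-(N-a)\},\ldots,\min\{a,b\}\}$ (in degenerate cases with $a=0$ or $b=0$ this is the point mass at $0$). *)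

theory Defs
  imports "HOL-Probability.Probability"
begin

text \<open>Hypergeometric distribution Hyp(N,a,b): number of black marbles in a uniform
  sample without replacement of size b from an urn of N marbles, the marbles
  0,...,a-1 being black and a,...,N-1 white. Intended for a \<le> N, b \<le> N.\<close>
definition hyp_pmf :: "nat \<Rightarrow> nat \<Rightarrow> nat \<Rightarrow> nat pmf" where
  "hyp_pmf N a b =
     map_pmf (\<lambda>S. card (S \<inter> {..<a})) (pmf_of_set {S. S \<subseteq> {..<N} \<and> card S = b})"

end

theory Submission
  imports Defs
begin

theorem lemma3:
  fixes n k i m :: nat
  assumes "1 \<le> k" and "k \<le> n"
    and "1 \<le> i" and "i \<le> n"
    and "m \<le> min i k"
  shows "measure_pmf.prob (hyp_pmf n i k) {m..} =
    real (k choose m) * real (i choose m) / real (n choose m) *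
    measure_pmf.expectation (hyp_pmf (n - m) (i - m) (k - m))
      (\<lambda>z. 1 / real ((z + m) choose m))"
proof -
  have count_split: "card {S. S \<subseteq> {..<N} \<and> card S = b \<and> card (S \<inter> {..<a}) = j}
         = (a choose j) * ((N - a) choose (b - j))"
    if CS: "a \<le> N" "j \<le> b" for a N b j :: nat
  proof -
    let ?X = "{X. X \<subseteq> {..<a} \<and> card X = j}"
    let ?Y = "{Y. Y \<subseteq> {a..<N} \<and> card Y = b - j}"
    have eq: "{S. S \<subseteq> {..<N} \<and> card S = b \<and> card (S \<inter> {..<a}) = j}
        = (\<lambda>(X,Y). X \<union> Y) ` (?X \<times> ?Y)"
    proof (rule set_eqI, rule iffI)
      fix S assume S: "S \<in> {S. S \<subseteq> {..<N} \<and> card S = b \<and> card (S \<inter> {..<a}) = j}"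
      have fin: "finite S" using S finite_subset by blast
      have "S = (S \<inter> {..<a}) \<union> (S \<inter> {a..<N})" using S by auto
      moreover have "card (S \<inter> {a..<N}) = b - j"
      proof -
        have "card S = card ((S \<inter> {..<a}) \<union> (S \<inter> {a..<N}))"
          using \<open>S = _\<close> by (rule arg_cong)
        also have "\<dots> = card (S \<inter> {..<a}) + card (S \<inter> {a..<N})"
          using fin by (intro card_Un_disjoint) auto
        finally have "card S = card (S \<inter> {..<a}) + card (S \<inter> {a..<N})" .
        then show ?thesis using S by (metis (mono_tags, lifting) add_diff_cancel_left' mem_Collect_eq)
      qed
      moreover have "(S \<inter> {..<a}, S \<inter> {a..<N}) \<in> ?X \<times> ?Y"
        using S \<open>card (S \<inter> {a..<N}) = b - j\<close> by blast
      ultimately show "S \<in> (\<lambda>(X,Y). X \<union> Y) ` (?X \<times> ?Y)"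
        by (metis (no_types, lifting) case_prod_conv image_eqI)
    next
      fix S assume "S \<in> (\<lambda>(X,Y). X \<union> Y) ` (?X \<times> ?Y)"
      then obtain X Y where X: "X \<subseteq> {..<a}" "card X = j" and Y: "Y \<subseteq> {a..<N}" "card Y = b - j"
        and SXY: "S = X \<union> Y" by auto
      have fX: "finite X" "finite Y" using X Y finite_subset by auto
      have h1: "\<forall>x\<in>X. x < a" using X(1) by auto
      have h2: "\<forall>x\<in>Y. a \<le> x" using Y(1) by auto
      have dj: "X \<inter> Y = {}" using h1 h2 by (meson disjoint_iff not_le)
      have "card S = j + (b - j)" using SXY card_Un_disjoint[OF fX dj] X Y by simp
      have y0: "Y \<inter> {..<a} = {}" using h2 by auto
      have x0: "X \<inter> {..<a} = X" using X(1) by auto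
      have c3: "S \<inter> {..<a} = X" by (simp add: SXY Int_Un_distrib2 x0 y0)
      have c1: "S \<subseteq> {..<N}" using X(1) Y(1) CS(1) SXY by auto
      have c2: "card S = b" using \<open>card S = j + (b - j)\<close> CS(2) by simp
      show "S \<in> {S. S \<subseteq> {..<N} \<and> card S = b \<and> card (S \<inter> {..<a}) = j}"
        using c1 c2 c3 X(2) by simp
    qed
    have inj: "inj_on (\<lambda>(X,Y). X \<union> Y) (?X \<times> ?Y)"
    proof (rule inj_onI, clarsimp)
      fix X Y X' Y' assume "X \<subseteq> {..<a}" "Y \<subseteq> {a..<N}" "X' \<subseteq> {..<a}" "Y' \<subseteq> {a..<N}"
        "X \<union> Y = X' \<union> Y'"
      note E = \<open>X \<union> Y = X' \<union> Y'\<close>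
      have "X = (X \<union> Y) \<inter> {..<a}" using \<open>X \<subseteq> {..<a}\<close> \<open>Y \<subseteq> {a..<N}\<close> by auto
      also have "\<dots> = (X' \<union> Y') \<inter> {..<a}" using E by simp
      also have "\<dots> = X'" using \<open>X' \<subseteq> {..<a}\<close> \<open>Y' \<subseteq> {a..<N}\<close> by auto
      finally have 1: "X = X'" .
      have "Y = (X \<union> Y) \<inter> {a..}" using \<open>X \<subseteq> {..<a}\<close> \<open>Y \<subseteq> {a..<N}\<close> by auto
      also have "\<dots> = (X' \<union> Y') \<inter> {a..}" using E by simp
      also have "\<dots> = Y'" using \<open>X' \<subseteq> {..<a}\<close> \<open>Y' \<subseteq> {a..<N}\<close> by auto
      finally show "X = X' \<and> Y = Y'" using 1 by simp
    qed
    have "card ((\<lambda>(X,Y). X \<union> Y) ` (?X \<times> ?Y)) = card ?X * card ?Y"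
      by (simp add: card_image[OF inj] card_cartesian_product)
    also have "\<dots> = (a choose j) * ((N - a) choose (b - j))"
      by (simp add: n_subsets)
    finally show ?thesis using eq by simp
  qed
  have pmf_hyp: "pmf (hyp_pmf N a b) j = real (a choose j) * real ((N - a) choose (b - j)) / real (N choose b)"
    if PH: "a \<le> N" "b \<le> N" "j \<le> b" for a N b j :: nat
  proof -
    let ?F = "{S. S \<subseteq> {..<N} \<and> card S = b}"
    have fin: "finite ?F" by (rule finite_subset[of _ "Pow {..<N}"]) auto
    have ne: "?F \<noteq> {}"
    proof -
      have "{..<b} \<in> ?F" using PH by auto
      then show ?thesis by blast
    qed
    have "pmf (hyp_pmf N a b) j = measure (pmf_of_set ?F) ((\<lambda>S. card (S \<inter> {..<a})) -` {j})"
      unfolding hyp_pmf_def by (simp add: pmf_map)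
    also have "\<dots> = card (?F \<inter> ((\<lambda>S. card (S \<inter> {..<a})) -` {j})) / card ?F"
      using measure_pmf_of_set[OF ne fin] by simp
    also have "?F \<inter> ((\<lambda>S. card (S \<inter> {..<a})) -` {j}) = {S. S \<subseteq> {..<N} \<and> card S = b \<and> card (S \<inter> {..<a}) = j}"
      by auto
    also have "card ?F = N choose b" using n_subsets[of "{..<N}" b] by simp
    finally show ?thesis using count_split[OF PH(1,3)] by simp
  qed
  have set_hyp: "set_pmf (hyp_pmf N a b) \<subseteq> {..b}"
    if SH: "b \<le> N" for b N a :: nat
  proof -
    let ?F = "{S. S \<subseteq> {..<N} \<and> card S = b}"
    have fin: "finite ?F" by (rule finite_subset[of _ "Pow {..<N}"]) auto
    have ne: "?F \<noteq> {}"
    proof -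
      have "{..<b} \<in> ?F" using SH by auto
      then show ?thesis by blast
    qed
    have "card (S \<inter> {..<a}) \<le> b" if S: "S \<in> ?F" for S
    proof -
      have "finite S" using S finite_subset by blast
      then have "card (S \<inter> {..<a}) \<le> card S" by (intro card_mono) auto
      then show ?thesis using S by simp
    qed
    then show ?thesis unfolding hyp_pmf_def set_map_pmf set_pmf_of_set[OF ne fin] by auto
  qed
  have term_id: "real (i choose (z + m)) * real ((n - i) choose (k - (z + m))) / real (n choose k) =
    real (k choose m) * real (i choose m) / real (n choose m) *
    (1 / real ((z + m) choose m) *
     (real ((i - m) choose z) * real ((n - m - (i - m)) choose (k - m - z)) / real ((n - m) choose (k - m))))"
    if TI: "k \<le> n" "i \<le> n" "m \<le> i" "m \<le> k" "z \<le> k - m" for n k i m z :: nat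
  proof -
    have A: "real (i choose m) * real ((i - m) choose z) = real (i choose (z + m)) * real ((z + m) choose m)"
    proof (cases "z + m \<le> i")
      case True
      then show ?thesis using choose_mult[of m "z + m" i] by (metis add_diff_cancel_right' le_add2 mult.commute of_nat_mult)
    next
      case False
      then have "i - m < z" "i < z + m" using TI by auto
      then have "(i - m) choose z = 0" "i choose (z + m) = 0" by (simp_all add: binomial_eq_0_iff)
      then show ?thesis by (metis mult_zero_left mult_zero_right of_nat_0)
    qed
    have B: "real (n choose m) * real ((n - m) choose (k - m)) = real (n choose k) * real (k choose m)"
      using choose_mult[of m k n] TI by (metis of_nat_mult)
    have p1: "real (n choose m) > 0" "real ((n - m) choose (k - m)) > 0" "real ((z + m) choose m) > 0"
      "real (n choose k) > 0" using TI by auto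
    have e: "n - m - (i - m) = n - i" "k - m - z = k - (z + m)" using TI by auto
    show ?thesis unfolding e using A B p1
      by (simp add: field_simps) (metis mult.commute mult.left_commute)
  qed
  let ?H = "hyp_pmf n i k"
  let ?Z = "hyp_pmf (n - m) (i - m) (k - m)"
  have mi: "m \<le> i" "m \<le> k" using assms by auto
  have "measure_pmf.prob ?H {m..} = measure_pmf.prob ?H ({m..} \<inter> set_pmf ?H)"
    by (simp add: measure_Int_set_pmf)
  also have "{m..} \<inter> set_pmf ?H = {m..k} \<inter> set_pmf ?H"
    using set_hyp[of k n i] assms by auto
  also have "measure_pmf.prob ?H \<dots> = measure_pmf.prob ?H {m..k}"
    by (simp add: measure_Int_set_pmf)
  also have "\<dots> = (\<Sum>j\<in>{m..k}. pmf ?H j)"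
    by (simp add: measure_measure_pmf_finite)
  also have "\<dots> = (\<Sum>z\<in>{..k-m}. pmf ?H (z + m))"
  proof -
    have "{m..k} = (\<lambda>z. z + m) ` {..k-m}"
    proof (rule set_eqI, rule iffI)
      fix x assume "x \<in> {m..k}"
      then show "x \<in> (\<lambda>z. z + m) ` {..k-m}" by (intro image_eqI[of _ _ "x - m"]) auto
    qed (use mi in auto)
    then show ?thesis by (simp add: sum.reindex inj_on_def)
  qed
  also have "\<dots> = (\<Sum>z\<in>{..k-m}. real (k choose m) * real (i choose m) / real (n choose m) *
      (1 / real ((z + m) choose m) * pmf ?Z z))"
  proof (rule sum.cong[OF refl])
    fix z assume z: "z \<in> {..k-m}"
    have "pmf ?H (z + m) = real (i choose (z + m)) * real ((n - i) choose (k - (z + m))) / real (n choose k)"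
      using pmf_hyp[of i n k "z + m"] assms z by auto
    moreover have "pmf ?Z z = real ((i - m) choose z) * real ((n - m - (i - m)) choose (k - m - z)) / real ((n - m) choose (k - m))"
      using pmf_hyp[of "i - m" "n - m" "k - m" z] assms z by auto
    ultimately show "pmf ?H (z + m) = real (k choose m) * real (i choose m) / real (n choose m) *
      (1 / real ((z + m) choose m) * pmf ?Z z)"
      using term_id[of k n i m z] assms z by auto
  qed
  also have "\<dots> = real (k choose m) * real (i choose m) / real (n choose m) *
      (\<Sum>z\<in>{..k-m}. 1 / real ((z + m) choose m) * pmf ?Z z)"
    by (simp add: sum_distrib_left)
  also have "(\<Sum>z\<in>{..k-m}. 1 / real ((z + m) choose m) * pmf ?Z z) =
      measure_pmf.expectation ?Z (\<lambda>z. 1 / real ((z + m) choose m))"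
  proof -
    have "set_pmf ?Z \<subseteq> {..k-m}" by (rule set_hyp) (use assms in auto)
    then show ?thesis by (intro integral_measure_pmf_real[symmetric]) blast+
  qed
  finally show ?thesis .
qed

end
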